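(* Let $\mathcal{G}=(\mathcal{V},\mathcal{E})$ be a finite graph and $x\in(0,\infty)^{\mathcal{V}}$ with $$\min_{\mathcal{G}'\subseteq\mathcal{G}}\mathfrak{K}_{\mathcal{G}'}(x|_{\mathcal{G}'})=0,$$ where $\mathcal{G}'$ runs over all induced subgraphs of $\mathcal{G}$. Let $\mathcal{G}_0=(\mathcal{V}_0,\mathcal{E}_0)$ be a minimal (with respect to inclusion) induced subgraph of $\mathcal{G}$ such that $\mathfrak{K}_{\mathcal{G}_0}(x|_{\mathcal{G}_0})=0$. Then $\mathcal{G}$ decomposes as the graph join of $\mathcal{G}_0$ with the complementary induced subgraph $\mathcal{G}_1$ on $\mathcal{V}\setminus\mathcal{V}_0$; i.e. every vertex of $\mathcal{V}\setminus\mathcal{V}_0$ is adjacent to every vertex of $\mathcal{V}_0$.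
   Context: Graphs are finite, simple, undirected. A clique is a set of pairwise adjacent vertices (the empty set is a clique). An induced subgraph $\mathcal{G}'$ has vertex set $\mathcal{V}'\subseteq\mathcal{V}$ and all edges of $\mathcal{G}$ between vertices of $\mathcal{V}'$; $x|_{\mathcal{G}'}=(x_v)_{v\in\mathcal{V}'}$. $\mathfrak{K}_{\mathcal{G}}(x)=\sum_{\mathcal{K}\subseteq\mathcal{V}\text{ clique}}(-1)^{|\mathcal{K}|}\prod_{v\in\mathcal{K}}x_v$, the empty clique contributing $1$. The graph join of graphs with disjoint vertex sets $\mathcal{V}_0,\mathcal{V}_1$ has vertex set $\mathcal{V}_0\sqcup\mathcal{V}_1$, two vertices adjacent iff adjacent within the same piece or lying in different pieces. *)

theory Defs
  imports Complex_Main
begin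

text \<open>A finite simple graph is given by a finite vertex set V and an edge relation E
  that is symmetric and irreflexive (on V). Induced subgraphs are identified with
  their vertex sets U \<subseteq> V.\<close>

definition simple_graph :: "'a set \<Rightarrow> ('a \<Rightarrow> 'a \<Rightarrow> bool) \<Rightarrow> bool" where
  "simple_graph V E \<longleftrightarrow> finite V \<and> (\<forall>u v. E u v \<longrightarrow> E v u) \<and> (\<forall>v. \<not> E v v)"

definition is_clique :: "('a \<Rightarrow> 'a \<Rightarrow> bool) \<Rightarrow> 'a set \<Rightarrow> bool" where
  "is_clique E K \<longleftrightarrow> (\<forall>u\<in>K. \<forall>v\<in>K. u \<noteq> v \<longrightarrow> E u v)"

definition clique_poly :: "'a set \<Rightarrow> ('a \<Rightarrow> 'a \<Rightarrow> bool) \<Rightarrow> ('a \<Rightarrow> real) \<Rightarrow> real" where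
  "clique_poly U E x = (\<Sum>K\<in>{K. K \<subseteq> U \<and> is_clique E K}. (-1) ^ card K * (\<Prod>v\<in>K. x v))"

end

theory Submission
  imports Defs
begin

lemma clique_poly_insert:
  assumes fin: "finite U" and uU: "u \<notin> U" and irr: "\<not> E u u" and sym: "\<forall>a b. E a b \<longrightarrow> E b a"
  shows "clique_poly (insert u U) E x = clique_poly U E x - x u * clique_poly {w\<in>U. E u w} E x"
proof -
  let ?A = "{K. K \<subseteq> U \<and> is_clique E K}"
  let ?C = "{K. K \<subseteq> {w\<in>U. E u w} \<and> is_clique E K}"
  have split: "{K. K \<subseteq> insert u U \<and> is_clique E K} = ?A \<union> insert u ` ?C"
  proof (rule set_eqI, rule iffI)
    fix K assume K: "K \<in> {K. K \<subseteq> insert u U \<and> is_clique E K}"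
    show "K \<in> ?A \<union> insert u ` ?C"
    proof (cases "u \<in> K")
      case True
      have "K - {u} \<in> ?C" using K True uU unfolding is_clique_def by auto
      moreover have "K = insert u (K - {u})" using True by blast
      ultimately show ?thesis by blast
    next
      case False then show ?thesis using K by blast
    qed
  next
    fix K assume "K \<in> ?A \<union> insert u ` ?C"
    then show "K \<in> {K. K \<subseteq> insert u U \<and> is_clique E K}"
    proof
      assume "K \<in> ?A" then show ?thesis by blast
    next
      assume "K \<in> insert u ` ?C"
      then obtain L where L: "L \<in> ?C" "K = insert u L" by blast
      show ?thesis using L irr sym unfolding is_clique_def by auto
    qed
  qed
  have finA: "finite ?A" using fin by (intro finite_subset[OF _ finite_Collect_subsets[of U]]) auto
  have finC: "finite ?C" using fin by (intro finite_subset[OF _ finite_Collect_subsets[of "{w\<in>U. E u w}"]]) auto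
  have disj: "?A \<inter> insert u ` ?C = {}" using uU by blast
  have inj: "inj_on (insert u) ?C"
  proof (rule inj_onI)
    fix a b assume "a \<in> ?C" "b \<in> ?C" "insert u a = insert u b"
    then show "a = b" using uU by (metis (no_types, lifting) insert_ident mem_Collect_eq subset_iff)
  qed
  have "clique_poly (insert u U) E x = (\<Sum>K\<in>?A. (-1) ^ card K * (\<Prod>v\<in>K. x v)) + (\<Sum>K\<in>insert u ` ?C. (-1) ^ card K * (\<Prod>v\<in>K. x v))"
    unfolding clique_poly_def split using finA finC disj by (intro sum.union_disjoint) auto
  also have "(\<Sum>K\<in>insert u ` ?C. (-1) ^ card K * (\<Prod>v\<in>K. x v)) = (\<Sum>K\<in>?C. (-1) ^ card (insert u K) * (\<Prod>v\<in>insert u K. x v))"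
    using inj by (simp add: sum.reindex)
  also have "\<dots> = (\<Sum>K\<in>?C. - x u * ((-1) ^ card K * (\<Prod>v\<in>K. x v)))"
  proof (rule sum.cong[OF refl])
    fix K assume K: "K \<in> ?C"
    have fK: "finite K" using K fin by (auto intro: finite_subset)
    have uK: "u \<notin> K" using K uU by blast
    show "(-1) ^ card (insert u K) * (\<Prod>v\<in>insert u K. x v) = - x u * ((-1) ^ card K * (\<Prod>v\<in>K. x v))"
      using fK uK by simp
  qed
  also have "\<dots> = - x u * clique_poly {w\<in>U. E u w} E x"
    unfolding clique_poly_def by (simp add: sum_distrib_left)
  finally show ?thesis unfolding clique_poly_def by simp
qed

theorem lemma4p5:
  fixes V :: "'a set" and E :: "'a \<Rightarrow> 'a \<Rightarrow> bool" and x :: "'a \<Rightarrow> real" and V0 :: "'a set"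
  assumes graph: "simple_graph V E"
    and pos: "\<forall>v\<in>V. x v > 0"
    and min_zero: "(\<forall>U. U \<subseteq> V \<longrightarrow> clique_poly U E x \<ge> 0) \<and> (\<exists>U. U \<subseteq> V \<and> clique_poly U E x = 0)"
    and V0_sub: "V0 \<subseteq> V"
    and V0_zero: "clique_poly V0 E x = 0"
    and V0_minimal: "\<forall>U. U \<subset> V0 \<longrightarrow> clique_poly U E x \<noteq> 0"
  shows "\<forall>u\<in>V - V0. \<forall>v\<in>V0. E u v"
proof (intro ballI, rule ccontr)
  fix u v assume u: "u \<in> V - V0" and v: "v \<in> V0" and nE: "\<not> E u v"
  have fin: "finite V0" using graph V0_sub unfolding simple_graph_def by (meson finite_subset)
  have irr: "\<not> E u u" using graph unfolding simple_graph_def by blast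
  have symE: "\<forall>a b. E a b \<longrightarrow> E b a" using graph unfolding simple_graph_def by blast
  let ?N = "{w\<in>V0. E u w}"
  have sub: "?N \<subset> V0" using v nE by blast
  have N0: "clique_poly ?N E x \<noteq> 0" using V0_minimal sub by blast
  have Nge: "clique_poly ?N E x \<ge> 0" using min_zero sub V0_sub by blast
  have xu: "x u > 0" using pos u by blast
  have "clique_poly (insert u V0) E x = - x u * clique_poly ?N E x"
    using clique_poly_insert[of V0 u E x] fin irr symE u V0_zero by simp
  also have "\<dots> < 0" using N0 Nge xu by (simp add: mult_pos_pos)
  finally have "clique_poly (insert u V0) E x < 0" .
  moreover have "clique_poly (insert u V0) E x \<ge> 0" using min_zero u V0_sub by blast
  ultimately show False by linarith
qed

end
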